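(* Let $\kappa$ be a cumulant function with effective domain $\Theta$ satisfying Assumption (A1), let $v>0$, $\varphi>0$, $\theta\in\mathring\Theta$, $Y\sim\mathrm{EDF}(\theta,v,\varphi,\kappa)$ and $\delta\in(0,1)$. Define the random variables $$l^{\delta}(Y,v,\varphi,\kappa)=\inf\{\mu\in\kappa'(\mathring\Theta)\,:\,F^*(Y;h(\mu),v,\varphi,\kappa)\le 1-\delta\},$$ $$u^{\delta}(Y,v,\varphi,\kappa)=\sup\{\mu\in\kappa'(\mathring\Theta)\,:\,F(Y;h(\mu),v,\varphi,\kappa)\ge \delta\}.$$ Then $\mathbb P(\mathbb E[Y]\ge l^{\delta}(Y,v,\varphi,\kappa))\ge 1-\delta$ and $\mathbb P(\mathbb E[Y]\le u^{\delta}(Y,v,\varphi,\kappa))\ge 1-\delta$.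
   Context: A real random variable $Y$ follows $\mathrm{EDF}(\theta,v,\varphi,\kappa)$ if it has density $f(y)=\exp\{(y\theta-\kappa(\theta))/(\varphi/v)+a(y;v/\varphi)\}$ with respect to a $\sigma$-finite measure $\nu$ on $\mathbb R$ not depending on $\theta$; $\theta\in\Theta$ is the canonical parameter, $\Theta$ the effective domain, $\kappa$ the cumulant function, $v>0$ the volume, $\varphi>0$ the dispersion parameter, $a$ a normalizing function. Assumption (A1): $\Theta$ has non-empty interior $\mathring{\Theta}$ and $\nu$ is not a single point mass. Then $\kappa$ is strictly convex and smooth on $\mathring\Theta$, $\mathbb E[Y]=\kappa'(\theta)$, $\kappa'(\mathring\Theta)$ is the mean parameter space and $h=(\kappa')^{-1}$ the canonical link. For $\mu\in\kappa'(\mathring\Theta)$ and $y\in\mathbb R$, $F(y;h(\mu),v,\varphi,\kappa)=\mathbb P(W\le y)$ and $F^*(y;h(\mu),v,\varphi,\kappa)=\mathbb P(W<y)$ where $W\sim\mathrm{EDF}(h(\mu),v,\varphi,\kappa)$. *)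

theory Defs
  imports "HOL-Probability.Probability"
begin

definition edf_density ::
  "(real \<Rightarrow> real) \<Rightarrow> (real \<Rightarrow> real \<Rightarrow> real) \<Rightarrow> real \<Rightarrow> real \<Rightarrow> real \<Rightarrow> real \<Rightarrow> real" where
  "edf_density \<kappa> a v \<phi> \<theta> y = exp ((y * \<theta> - \<kappa> \<theta>) / (\<phi> / v) + a y (v / \<phi>))"

definition edf_measure ::
  "real measure \<Rightarrow> (real \<Rightarrow> real) \<Rightarrow> (real \<Rightarrow> real \<Rightarrow> real) \<Rightarrow> real \<Rightarrow> real \<Rightarrow> real \<Rightarrow> real measure" where
  "edf_measure \<nu> \<kappa> a v \<phi> \<theta> = density \<nu> (\<lambda>y. ennreal (edf_density \<kappa> a v \<phi> \<theta> y))"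

definition canon_link :: "(real \<Rightarrow> real) \<Rightarrow> real set \<Rightarrow> real \<Rightarrow> real" where
  "canon_link \<kappa> \<Theta> \<mu> = the_inv_into (interior \<Theta>) (deriv \<kappa>) \<mu>"

text \<open>F(y; h(mu), v, phi, kappa) = P(W <= y) and F*(y; ...) = P(W < y).\<close>
definition edf_cdf ::
  "real measure \<Rightarrow> (real \<Rightarrow> real) \<Rightarrow> real set \<Rightarrow> (real \<Rightarrow> real \<Rightarrow> real) \<Rightarrow> real \<Rightarrow> real \<Rightarrow> real \<Rightarrow> real \<Rightarrow> real" where
  "edf_cdf \<nu> \<kappa> \<Theta> a v \<phi> \<mu> y = measure (edf_measure \<nu> \<kappa> a v \<phi> (canon_link \<kappa> \<Theta> \<mu>)) {..y}"

definition edf_cdf_strict ::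
  "real measure \<Rightarrow> (real \<Rightarrow> real) \<Rightarrow> real set \<Rightarrow> (real \<Rightarrow> real \<Rightarrow> real) \<Rightarrow> real \<Rightarrow> real \<Rightarrow> real \<Rightarrow> real \<Rightarrow> real" where
  "edf_cdf_strict \<nu> \<kappa> \<Theta> a v \<phi> \<mu> y = measure (edf_measure \<nu> \<kappa> a v \<phi> (canon_link \<kappa> \<Theta> \<mu>)) {..<y}"

text \<open>Lower and upper bounds, as extended reals (inf of the empty set is +infinity,
  sup of the empty set is -infinity, unbounded sets give -/+ infinity).\<close>
definition lower_bd ::
  "real measure \<Rightarrow> (real \<Rightarrow> real) \<Rightarrow> real set \<Rightarrow> (real \<Rightarrow> real \<Rightarrow> real) \<Rightarrow> real \<Rightarrow> real \<Rightarrow> real \<Rightarrow> real \<Rightarrow> ereal" where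
  "lower_bd \<nu> \<kappa> \<Theta> a v \<phi> \<delta> y =
     Inf (ereal ` {\<mu> \<in> deriv \<kappa> ` interior \<Theta>. edf_cdf_strict \<nu> \<kappa> \<Theta> a v \<phi> \<mu> y \<le> 1 - \<delta>})"

definition upper_bd ::
  "real measure \<Rightarrow> (real \<Rightarrow> real) \<Rightarrow> real set \<Rightarrow> (real \<Rightarrow> real \<Rightarrow> real) \<Rightarrow> real \<Rightarrow> real \<Rightarrow> real \<Rightarrow> real \<Rightarrow> ereal" where
  "upper_bd \<nu> \<kappa> \<Theta> a v \<phi> \<delta> y =
     Sup (ereal ` {\<mu> \<in> deriv \<kappa> ` interior \<Theta>. edf_cdf \<nu> \<kappa> \<Theta> a v \<phi> \<mu> y \<ge> \<delta>})"

end

theory Submission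
  imports Defs
begin

lemma downset_cases:
  fixes A :: "real set"
  assumes down: "\<And>x y. y \<in> A \<Longrightarrow> x \<le> y \<Longrightarrow> x \<in> A"
  shows "A = {} \<or> A = UNIV \<or> (\<exists>c. A = {..c} \<and> c \<in> A) \<or> (\<exists>c. A = {..<c} \<and> (\<forall>x<c. x \<in> A))"
proof (cases "A = {}")
  case False
  show ?thesis
  proof (cases "bdd_above A")
    case False
    have all: "x \<in> A" for x
    proof -
      from False obtain y where "y \<in> A" "x < y" unfolding bdd_above_def
        by (meson linorder_not_le)
      then show "x \<in> A" using down[of y x] by simp
    qed
    have "A = UNIV" using all by blast
    then show ?thesis by blast
  next
    case True
    define c where "c = Sup A"
    have lt: "x \<in> A" if "x < c" for x
    proof -
      from that \<open>A \<noteq> {}\<close> obtain y where "y \<in> A" "x < y"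
        unfolding c_def using less_cSup_iff[of A x] True by blast
      then show ?thesis using down[of y x] by simp
    qed
    have up: "x \<le> c" if "x \<in> A" for x
      unfolding c_def using True that by (simp add: cSup_upper)
    show ?thesis
    proof (cases "c \<in> A")
      case True
      have "A = {..c}"
      proof (intro set_eqI iffI)
        fix x assume "x \<in> {..c}" then show "x \<in> A" using down[of c x] True by simp
      qed (use up in simp)
      then show ?thesis using True by blast
    next
      case False
      have "A = {..<c}"
      proof (intro set_eqI iffI)
        fix x assume "x \<in> A" then show "x \<in> {..<c}" using up[of x] False by (cases "x = c") auto
      qed (use lt in simp)
      then show ?thesis using lt by blast
    qed
  qed
qed simp

lemma upset_cases:
  fixes A :: "real set"
  assumes upc: "\<And>x y. y \<in> A \<Longrightarrow> y \<le> x \<Longrightarrow> x \<in> A"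
  shows "A = {} \<or> A = UNIV \<or> (\<exists>c. A = {c..} \<and> c \<in> A) \<or> (\<exists>c. A = {c<..} \<and> (\<forall>x>c. x \<in> A))"
proof (cases "A = {}")
  case False
  show ?thesis
  proof (cases "bdd_below A")
    case False
    have all: "x \<in> A" for x
    proof -
      from False obtain y where "y \<in> A" "y < x" unfolding bdd_below_def
        by (meson linorder_not_le)
      then show "x \<in> A" using upc[of y x] by simp
    qed
    have "A = UNIV" using all by blast
    then show ?thesis by blast
  next
    case True
    define c where "c = Inf A"
    have lt: "x \<in> A" if "c < x" for x
    proof -
      from that \<open>A \<noteq> {}\<close> obtain y where "y \<in> A" "y < x"
        unfolding c_def using cInf_less_iff[of A x] True by blast
      then show ?thesis using upc[of y x] by simp
    qed
    have lo: "c \<le> x" if "x \<in> A" for x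
      unfolding c_def using True that by (simp add: cInf_lower)
    show ?thesis
    proof (cases "c \<in> A")
      case True
      have "A = {c..}"
      proof (intro set_eqI iffI)
        fix x assume "x \<in> {c..}" then show "x \<in> A" using upc[of c x] True by simp
      qed (use lo in simp)
      then show ?thesis using True by blast
    next
      case False
      have "A = {c<..}"
      proof (intro set_eqI iffI)
        fix x assume "x \<in> A" then show "x \<in> {c<..}" using lo[of x] False by (cases "x = c") auto
      qed (use lt in simp)
      then show ?thesis using lt by blast
    qed
  qed
qed simp

lemma downset_borel:
  fixes A :: "real set"
  assumes "\<And>x y. y \<in> A \<Longrightarrow> x \<le> y \<Longrightarrow> x \<in> A"
  shows "A \<in> sets borel"
proof -
  have "A = {} \<or> A = UNIV \<or> (\<exists>c. A = {..c} \<and> c \<in> A) \<or> (\<exists>c. A = {..<c} \<and> (\<forall>x<c. x \<in> A))"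
    by (rule downset_cases) (use assms in blast)
  then show ?thesis by (elim disjE exE conjE; simp)
qed

lemma upset_borel:
  fixes A :: "real set"
  assumes "\<And>x y. y \<in> A \<Longrightarrow> y \<le> x \<Longrightarrow> x \<in> A"
  shows "A \<in> sets borel"
proof -
  have "A = {} \<or> A = UNIV \<or> (\<exists>c. A = {c..} \<and> c \<in> A) \<or> (\<exists>c. A = {c<..} \<and> (\<forall>x>c. x \<in> A))"
    by (rule upset_cases) (use assms in blast)
  then show ?thesis by (elim disjE exE conjE; simp)
qed


lemma downset_prob_le:
  fixes P :: "real measure" and A :: "real set" and d :: real
  assumes P: "prob_space P" and sP: "sets P = sets borel"
    and down: "\<And>x y. y \<in> A \<Longrightarrow> x \<le> y \<Longrightarrow> x \<in> A"
    and bnd: "\<And>y. y \<in> A \<Longrightarrow> measure P {..y} \<le> d" and d: "0 \<le> d"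
  shows "measure P A \<le> d"
proof -
  interpret prob_space P by (rule P)
  have "A = {} \<or> A = UNIV \<or> (\<exists>c. A = {..c} \<and> c \<in> A) \<or> (\<exists>c. A = {..<c} \<and> (\<forall>x<c. x \<in> A))"
    by (rule downset_cases) (use down in blast)
  then show ?thesis
  proof (elim disjE exE conjE)
    assume "A = {}" then show ?thesis using d by simp
  next
    assume AU: "A = UNIV"
    have lim: "(\<lambda>n. measure P {..real n}) \<longlonglongrightarrow> measure P (\<Union>n. {..real n})"
      by (rule finite_Lim_measure_incseq) (auto simp: sP incseq_def)
    have U: "(\<Union>n. {..real n}) = A"
      using AU by (auto intro: real_arch_simple)
    show ?thesis
      by (rule LIMSEQ_le_const2[OF lim[unfolded U]]) (use bnd AU in simp)
  next
    fix c assume "A = {..c}" "c \<in> A" then show ?thesis using bnd by simp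
  next
    fix c assume A: "A = {..<c}" and lt: "\<forall>x<c. x \<in> A"
    have inc: "incseq (\<lambda>n::nat. {..c - 1 / real (Suc n)})"
      unfolding incseq_def by (auto simp: frac_le)
    have lim: "(\<lambda>n. measure P {..c - 1 / real (Suc n)}) \<longlonglongrightarrow> measure P (\<Union>n. {..c - 1 / real (Suc n)})"
      by (rule finite_Lim_measure_incseq) (use inc in \<open>auto simp: sP\<close>)
    have U: "(\<Union>n. {..c - 1 / real (Suc n)}) = A"
    proof (intro set_eqI iffI)
      fix x assume "x \<in> A"
      then have "0 < c - x" using A by simp
      then obtain n where "inverse (real (Suc n)) < c - x" using reals_Archimedean by blast
      then have "x \<le> c - 1 / real (Suc n)" by (simp add: field_simps)
      then show "x \<in> (\<Union>n. {..c - 1 / real (Suc n)})" by blast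
    next
      fix x assume "x \<in> (\<Union>n. {..c - 1 / real (Suc n)})"
      then obtain n where "x \<le> c - 1 / real (Suc n)" by blast
      moreover have "0 < 1 / real (Suc n)" by simp
      ultimately have "x < c" by linarith
      then show "x \<in> A" using A by simp
    qed
    show ?thesis
    proof (rule LIMSEQ_le_const2[OF lim[unfolded U]])
      show "\<exists>N. \<forall>n\<ge>N. measure P {..c - 1 / real (Suc n)} \<le> d"
      proof (intro exI allI impI)
        fix n :: nat
        have "0 < 1 / real (Suc n)" by simp
        then have "c - 1 / real (Suc n) \<in> A" using lt by simp
        then show "measure P {..c - 1 / real (Suc n)} \<le> d" by (rule bnd)
      qed
    qed
  qed
qed

lemma upset_prob_le:
  fixes P :: "real measure" and A :: "real set" and d :: real
  assumes P: "prob_space P" and sP: "sets P = sets borel"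
    and upc: "\<And>x y. y \<in> A \<Longrightarrow> y \<le> x \<Longrightarrow> x \<in> A"
    and bnd: "\<And>y. y \<in> A \<Longrightarrow> measure P {y..} \<le> d" and d: "0 \<le> d"
  shows "measure P A \<le> d"
proof -
  interpret prob_space P by (rule P)
  have "A = {} \<or> A = UNIV \<or> (\<exists>c. A = {c..} \<and> c \<in> A) \<or> (\<exists>c. A = {c<..} \<and> (\<forall>x>c. x \<in> A))"
    by (rule upset_cases) (use upc in blast)
  then show ?thesis
  proof (elim disjE exE conjE)
    assume "A = {}" then show ?thesis using d by simp
  next
    assume AU: "A = UNIV"
    have lim: "(\<lambda>n. measure P {- real n..}) \<longlonglongrightarrow> measure P (\<Union>n. {- real n..})"
      by (rule finite_Lim_measure_incseq) (auto simp: sP incseq_def)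
    have U: "(\<Union>n. {- real n..}) = A"
    proof -
      have "x \<in> (\<Union>n. {- real n..})" for x
      proof -
        obtain n where "- x \<le> real n" using real_arch_simple by blast
        then have "x \<in> {- real n..}" by simp
        then show ?thesis by blast
      qed
      then show ?thesis using AU by blast
    qed
    show ?thesis
      by (rule LIMSEQ_le_const2[OF lim[unfolded U]]) (use bnd AU in simp)
  next
    fix c assume "A = {c..}" "c \<in> A" then show ?thesis using bnd by simp
  next
    fix c assume A: "A = {c<..}" and lt: "\<forall>x>c. x \<in> A"
    have inc: "incseq (\<lambda>n::nat. {c + 1 / real (Suc n)..})"
      unfolding incseq_def by (auto simp: frac_le)
    have lim: "(\<lambda>n. measure P {c + 1 / real (Suc n)..}) \<longlonglongrightarrow> measure P (\<Union>n. {c + 1 / real (Suc n)..})"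
      by (rule finite_Lim_measure_incseq) (use inc in \<open>auto simp: sP\<close>)
    have U: "(\<Union>n. {c + 1 / real (Suc n)..}) = A"
    proof (intro set_eqI iffI)
      fix x assume "x \<in> A"
      then have "0 < x - c" using A by simp
      then obtain n where "inverse (real (Suc n)) < x - c" using reals_Archimedean by blast
      then have "c + 1 / real (Suc n) \<le> x" by (simp add: field_simps)
      then show "x \<in> (\<Union>n. {c + 1 / real (Suc n)..})" by blast
    next
      fix x assume "x \<in> (\<Union>n. {c + 1 / real (Suc n)..})"
      then obtain n where "c + 1 / real (Suc n) \<le> x" by blast
      moreover have "0 < 1 / real (Suc n)" by simp
      ultimately have "c < x" by linarith
      then show "x \<in> A" using A by simp
    qed
    show ?thesis
    proof (rule LIMSEQ_le_const2[OF lim[unfolded U]])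
      show "\<exists>N. \<forall>n\<ge>N. measure P {c + 1 / real (Suc n)..} \<le> d"
      proof (intro exI allI impI)
        fix n :: nat
        have "0 < 1 / real (Suc n)" by simp
        then have "c + 1 / real (Suc n) \<in> A" using lt by simp
        then show "measure P {c + 1 / real (Suc n)..} \<le> d" by (rule bnd)
      qed
    qed
  qed
qed


lemma abs_le_exps:
  fixes c y :: real
  assumes c: "0 < c"
  shows "\<bar>y\<bar> \<le> (exp (c * y) + exp (- (c * y))) / c"
proof -
  have 1: "c * \<bar>y\<bar> \<le> exp (c * \<bar>y\<bar>)" using exp_ge_add_one_self[of "c * \<bar>y\<bar>"] by linarith
  have 2: "exp (c * \<bar>y\<bar>) \<le> exp (c * y) + exp (- (c * y))"
  proof (cases "0 \<le> y")
    case True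
    then show ?thesis using exp_gt_zero[of "- (c * y)"] by simp
  next
    case False
    then have "\<bar>y\<bar> = - y" by simp
    then show ?thesis using exp_gt_zero[of "c * y"] by simp
  qed
  from 1 2 have "c * \<bar>y\<bar> \<le> exp (c * y) + exp (- (c * y))" by linarith
  then show ?thesis using c by (simp add: pos_le_divide_eq mult.commute)
qed

lemma abs_exp_minus_one:
  fixes x :: real
  shows "\<bar>exp x - 1\<bar> \<le> \<bar>x\<bar> * exp \<bar>x\<bar>"
proof (cases "0 \<le> x")
  case True
  have "1 - x \<le> exp (- x)" using exp_ge_add_one_self[of "- x"] by linarith
  then have "(1 - x) * exp x \<le> exp (- x) * exp x" by (rule mult_right_mono) simp
  also have "\<dots> = 1" by (simp add: exp_minus field_simps)
  finally have "exp x - 1 \<le> x * exp x" by (simp add: algebra_simps)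
  moreover have "1 \<le> exp x" using True by simp
  ultimately show ?thesis using True by simp
next
  case False
  have a: "1 + x \<le> exp x" by (rule exp_ge_add_one_self)
  have "exp x \<le> 1" using False by simp
  have "1 \<le> exp (- x)" using False by simp
  then have b: "- x * 1 \<le> - x * exp (- x)" using False by (intro mult_left_mono) simp_all
  have eq1: "\<bar>x\<bar> = - x" and eq2: "\<bar>exp x - 1\<bar> = 1 - exp x" using False \<open>exp x \<le> 1\<close> by simp_all
  show ?thesis unfolding eq1 eq2 using a b by linarith
qed

lemma dq_bound:
  fixes r e h y :: real
  assumes r: "0 < r" and e: "0 < e" and h: "h \<noteq> 0" "\<bar>h\<bar> \<le> e"
  shows "\<bar>(exp (r * h * y) - 1) / h\<bar> \<le> (exp (2 * r * e * y) + exp (- (2 * r * e * y))) / e"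
proof -
  have "\<bar>(exp (r * h * y) - 1) / h\<bar> = \<bar>exp (r * h * y) - 1\<bar> / \<bar>h\<bar>" by (simp add: abs_divide)
  also have "\<dots> \<le> (\<bar>r * h * y\<bar> * exp \<bar>r * h * y\<bar>) / \<bar>h\<bar>"
    by (rule divide_right_mono[OF abs_exp_minus_one]) simp
  also have "\<dots> = r * \<bar>y\<bar> * exp (r * \<bar>h\<bar> * \<bar>y\<bar>)"
    using r h by (simp add: abs_mult)
  also have "\<dots> \<le> r * \<bar>y\<bar> * exp (r * e * \<bar>y\<bar>)"
    using r h e by (intro mult_left_mono) (simp_all add: mult_right_mono)
  also have "r * \<bar>y\<bar> \<le> exp (r * e * \<bar>y\<bar>) / e"
  proof -
    have "r * e * \<bar>y\<bar> \<le> exp (r * e * \<bar>y\<bar>)" using exp_ge_add_one_self[of "r * e * \<bar>y\<bar>"] by linarith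
    then show ?thesis using e by (simp add: pos_le_divide_eq mult_ac)
  qed
  then have "r * \<bar>y\<bar> * exp (r * e * \<bar>y\<bar>) \<le> exp (r * e * \<bar>y\<bar>) / e * exp (r * e * \<bar>y\<bar>)"
    by (rule mult_right_mono) simp
  also have "\<dots> = exp (2 * r * e * \<bar>y\<bar>) / e"
    by (simp add: exp_add[symmetric])
  also have "exp (2 * r * e * \<bar>y\<bar>) \<le> exp (2 * r * e * y) + exp (- (2 * r * e * y))"
  proof (cases "0 \<le> y")
    case True
    then show ?thesis using exp_gt_zero[of "- (2 * r * e * y)"] by simp
  next
    case False
    then have "\<bar>y\<bar> = - y" by simp
    then show ?thesis using exp_gt_zero[of "2 * r * e * y"] by simp
  qed
  then have "exp (2 * r * e * \<bar>y\<bar>) / e \<le> (exp (2 * r * e * y) + exp (- (2 * r * e * y))) / e"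
    using e by (simp add: divide_right_mono)
  finally show ?thesis .
qed


locale edf_ctx =
  fixes \<nu> :: "real measure" and \<kappa> :: "real \<Rightarrow> real" and \<Theta> :: "real set"
    and a :: "real \<Rightarrow> real \<Rightarrow> real" and v \<phi> :: real
  assumes nu_sets: "sets \<nu> = sets borel"
    and a_meas: "(\<lambda>y. a y (v / \<phi>)) \<in> borel_measurable borel"
    and v_pos: "v > 0" and phi_pos: "\<phi> > 0"
    and eff_dom: "\<Theta> = {t. (\<integral>\<^sup>+ y. ennreal (exp (y * t / (\<phi> / v) + a y (v / \<phi>))) \<partial>\<nu>) < \<infinity>}"
    and cumulant: "\<And>t. t \<in> \<Theta> \<Longrightarrow> (\<integral>\<^sup>+ y. ennreal (edf_density \<kappa> a v \<phi> t y) \<partial>\<nu>) = 1"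
    and A1_nu: "\<not> (\<exists>x. AE y in \<nu>. y = x)"
begin

definition r where "r = v / \<phi>"

definition G where "G t y = exp (r * t * y + a y r)"
definition Z where "Z t = (\<integral>y. G t y \<partial>\<nu>)"
definition m where "m t = (\<integral>y. y * edf_density \<kappa> a v \<phi> t y \<partial>\<nu>)"

lemma r_pos: "0 < r" using v_pos phi_pos by (simp add: r_def)

lemma meas_nu:
  fixes f :: "real \<Rightarrow> real"
  assumes "f \<in> borel_measurable borel" shows "f \<in> borel_measurable \<nu>"
proof -
  have eq: "borel_measurable \<nu> = (borel_measurable borel :: (real \<Rightarrow> real) set)" by (rule measurable_cong_sets[OF nu_sets refl])
  show ?thesis by (subst eq) (rule assms)
qed

lemma a_meas_b[measurable]: "(\<lambda>y. a y r) \<in> borel_measurable borel"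
  using a_meas by (simp add: r_def)

lemma div_r: "x / (\<phi> / v) = r * x"
  by (simp add: r_def)

lemma dens_alt: "edf_density \<kappa> a v \<phi> t y = exp (r * (y * t - \<kappa> t) + a y r)"
  unfolding edf_density_def div_r r_def[symmetric] ..

lemma G_meas[measurable]: "G t \<in> borel_measurable \<nu>"
  unfolding G_def by (rule meas_nu) measurable

lemma dens_meas[measurable]: "edf_density \<kappa> a v \<phi> t \<in> borel_measurable \<nu>"
  unfolding dens_alt by (rule meas_nu) measurable

lemma id_meas_nu[measurable]: "(\<lambda>y::real. y) \<in> borel_measurable \<nu>"
  by (rule meas_nu) simp

lemma G_pos: "0 < G t y" unfolding G_def by simp

lemma Theta_iff: "t \<in> \<Theta> \<longleftrightarrow> (\<integral>\<^sup>+ y. ennreal (G t y) \<partial>\<nu>) < \<infinity>"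
proof -
  have eq: "y * t / (\<phi> / v) + a y (v / \<phi>) = r * t * y + a y r" for y
    unfolding div_r r_def[symmetric] by (simp only: mult_ac)
  show ?thesis unfolding eff_dom G_def by (simp only: eq mem_Collect_eq)
qed

lemma G_int: "t \<in> \<Theta> \<Longrightarrow> integrable \<nu> (G t)"
  by (rule integrableI_nonneg) (auto simp: Theta_iff less_imp_le[OF G_pos])

lemma G_shift: "G (t + h) y = G t y * exp (r * h * y)"
proof -
  have "r * (t + h) * y + a y r = (r * t * y + a y r) + r * h * y" by (simp only: ring_distribs add_ac)
  then show ?thesis unfolding G_def by (simp add: exp_add)
qed

lemma dens_eq: "edf_density \<kappa> a v \<phi> t y = G t y * exp (- r * \<kappa> t)"
proof -
  have "r * (y * t - \<kappa> t) + a y r = (r * t * y + a y r) + (- r * \<kappa> t)"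
    by (simp add: algebra_simps)
  then have "edf_density \<kappa> a v \<phi> t y = exp ((r * t * y + a y r) + (- r * \<kappa> t))"
    unfolding dens_alt by simp
  also have "\<dots> = G t y * exp (- r * \<kappa> t)" unfolding G_def by (rule exp_add)
  finally show ?thesis .
qed

lemma dens_pos: "0 < edf_density \<kappa> a v \<phi> t y"
  unfolding edf_density_def by simp

lemma dens_int: "t \<in> \<Theta> \<Longrightarrow> integrable \<nu> (edf_density \<kappa> a v \<phi> t)"
  by (rule integrableI_nonneg) (auto simp: cumulant less_imp_le[OF dens_pos])

lemma dens_integral: "t \<in> \<Theta> \<Longrightarrow> (\<integral>y. edf_density \<kappa> a v \<phi> t y \<partial>\<nu>) = 1"
  by (subst integral_eq_nn_integral) (auto simp: cumulant less_imp_le[OF dens_pos])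

lemma Z_kappa: "t \<in> \<Theta> \<Longrightarrow> Z t * exp (- r * \<kappa> t) = 1"
  using dens_integral[of t] unfolding Z_def dens_eq by simp

lemma Z_pos: "t \<in> \<Theta> \<Longrightarrow> 0 < Z t"
proof -
  assume "t \<in> \<Theta>"
  have "0 \<le> Z t" unfolding Z_def by (rule integral_nonneg_AE) (simp add: less_imp_le[OF G_pos])
  moreover have "Z t \<noteq> 0" using Z_kappa[OF \<open>t \<in> \<Theta>\<close>] by auto
  ultimately show ?thesis by simp
qed

lemma kappa_ln: "t \<in> \<Theta> \<Longrightarrow> \<kappa> t = ln (Z t) / r"
proof -
  assume t: "t \<in> \<Theta>"
  have "Z t = exp (r * \<kappa> t)"
    using Z_kappa[OF t] by (simp add: exp_minus field_simps)
  then have "ln (Z t) = r * \<kappa> t" by simp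
  then show ?thesis using r_pos by (simp add: eq_divide_eq)
qed

lemma dens_eq2: "t \<in> \<Theta> \<Longrightarrow> edf_density \<kappa> a v \<phi> t y = G t y / Z t"
proof -
  assume t: "t \<in> \<Theta>"
  have "exp (- r * \<kappa> t) = 1 / Z t"
    using Z_kappa[OF t] Z_pos[OF t] by (simp add: eq_divide_eq mult.commute)
  then show ?thesis unfolding dens_eq by simp
qed

lemma interior_margin:
  assumes "t \<in> interior \<Theta>"
  obtains e where "0 < e" "\<And>s. \<bar>s - t\<bar> \<le> e \<Longrightarrow> s \<in> \<Theta>"
proof -
  from assms obtain d where d: "0 < d" "ball t d \<subseteq> \<Theta>" by (auto simp: mem_interior)
  show ?thesis
  proof (rule that[of "d / 2"])
    fix s assume "\<bar>s - t\<bar> \<le> d / 2"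
    then have "s \<in> ball t d" using d by (simp add: dist_real_def abs_minus_commute)
    then show "s \<in> \<Theta>" using d by blast
  qed (use d in simp)
qed

lemma yG_bound: "0 < e \<Longrightarrow> \<bar>y\<bar> * G t y \<le> (G (t + e) y + G (t - e) y) / (r * e)"
proof -
  assume e: "0 < e"
  have re: "0 < r * e" using e r_pos by simp
  have "\<bar>y\<bar> \<le> (exp (r * e * y) + exp (- (r * e * y))) / (r * e)"
    by (rule abs_le_exps[OF re])
  then have "\<bar>y\<bar> * G t y \<le> (exp (r * e * y) + exp (- (r * e * y))) / (r * e) * G t y"
    by (rule mult_right_mono) (simp add: less_imp_le[OF G_pos])
  also have "\<dots> = (G (t + e) y + G (t - e) y) / (r * e)"
    using G_shift[of t e y] G_shift[of t "- e" y] by (simp add: field_simps)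
  finally show ?thesis .
qed

lemma yG_int:
  assumes "t \<in> interior \<Theta>"
  shows "integrable \<nu> (\<lambda>y. y * G t y)"
proof -
  obtain e where e: "0 < e" "\<And>s. \<bar>s - t\<bar> \<le> e \<Longrightarrow> s \<in> \<Theta>" using interior_margin[OF assms] by blast
  have i1: "integrable \<nu> (G (t + e))" using e by (intro G_int) auto
  have i2: "integrable \<nu> (G (t - e))" using e by (intro G_int) auto
  have "integrable \<nu> (\<lambda>y. (G (t + e) y + G (t - e) y) / (r * e))"
    using Bochner_Integration.integrable_add[OF i1 i2] by (rule integrable_divide_zero)
  then show ?thesis
  proof (rule Bochner_Integration.integrable_bound)
    show "AE y in \<nu>. norm (y * G t y) \<le> norm ((G (t + e) y + G (t - e) y) / (r * e))"
    proof (intro AE_I2)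
      fix y
      have "norm (y * G t y) = \<bar>y\<bar> * G t y" using G_pos[of t y] by (simp add: abs_mult)
      also have "\<dots> \<le> (G (t + e) y + G (t - e) y) / (r * e)" by (rule yG_bound[OF e(1)])
      also have "\<dots> \<le> norm ((G (t + e) y + G (t - e) y) / (r * e))" by (metis real_norm_def abs_ge_self)
      finally show "norm (y * G t y) \<le> norm ((G (t + e) y + G (t - e) y) / (r * e))" .
    qed
  qed simp
qed


lemma Z_deriv:
  assumes t: "t \<in> interior \<Theta>"
  shows "(Z has_real_derivative (r * (\<integral>y. y * G t y \<partial>\<nu>))) (at t)"
proof -
  obtain e where e: "0 < e" "\<And>s. \<bar>s - t\<bar> \<le> e \<Longrightarrow> s \<in> \<Theta>" using interior_margin[OF t] by blast
  define \<epsilon> where "\<epsilon> = e / 2"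
  have \<epsilon>: "0 < \<epsilon>" "2 * \<epsilon> = e" using e by (simp_all add: \<epsilon>_def)
  define w where "w = (\<lambda>y. (G (t + e) y + G (t - e) y) / \<epsilon>)"
  have i1: "integrable \<nu> (G (t + e))" using e by (intro G_int) auto
  have i2: "integrable \<nu> (G (t - e))" using e by (intro G_int) auto
  have w_int: "integrable \<nu> w"
    unfolding w_def using Bochner_Integration.integrable_add[OF i1 i2] by (rule integrable_divide_zero)
  have tT: "t \<in> \<Theta>" using e by simp
  have ptw: "((\<lambda>h. (G (t + h) y - G t y) / h) \<longlongrightarrow> r * (y * G t y)) (at 0)" for y
  proof -
    have "((\<lambda>s. G s y) has_real_derivative r * (y * G t y)) (at t)"
      unfolding G_def by (auto intro!: derivative_eq_intros simp: algebra_simps)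
    then show ?thesis by (simp only: DERIV_def)
  qed
  have bound: "\<bar>(G (t + h) y - G t y) / h\<bar> \<le> w y" if h: "h \<noteq> 0" "\<bar>h\<bar> \<le> \<epsilon>" for h y
  proof -
    have eq: "(G (t + h) y - G t y) / h = G t y * ((exp (r * h * y) - 1) / h)"
      unfolding G_shift by (simp add: algebra_simps)
    have "\<bar>(G (t + h) y - G t y) / h\<bar> = G t y * \<bar>(exp (r * h * y) - 1) / h\<bar>"
      by (simp only: eq abs_mult abs_of_pos[OF G_pos])
    also have "\<dots> \<le> G t y * ((exp (2 * r * \<epsilon> * y) + exp (- (2 * r * \<epsilon> * y))) / \<epsilon>)"
      by (rule mult_left_mono[OF dq_bound[OF r_pos \<epsilon>(1) h]]) (simp add: less_imp_le[OF G_pos])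
    also have "\<dots> = w y"
    proof -
      have k: "2 * r * \<epsilon> * y = r * e * y" using \<epsilon>(2) by (simp add: mult_ac)
      have g1: "G (t + e) y = G t y * exp (r * e * y)" by (rule G_shift)
      have g2: "G (t - e) y = G t y * exp (- (r * e * y))" using G_shift[of t "- e" y] by simp
      show ?thesis
        unfolding w_def k g1 g2 by (simp add: distrib_left)
    qed
    finally show ?thesis .
  qed
  show ?thesis
    unfolding DERIV_def tendsto_at_iff_sequentially
  proof (intro allI impI)
    fix X :: "nat \<Rightarrow> real" assume X0: "\<forall>i. X i \<in> UNIV - {0}" and X: "X \<longlonglongrightarrow> 0"
    from X \<epsilon>(1) obtain N where N: "\<And>n. n \<ge> N \<Longrightarrow> \<bar>X n\<bar> < \<epsilon>"
      unfolding LIMSEQ_iff by fastforce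
    define Y where "Y = (\<lambda>n. X (n + N))"
    have Y0: "Y n \<noteq> 0" for n using X0 unfolding Y_def by auto
    have Yb: "\<bar>Y n\<bar> < \<epsilon>" for n unfolding Y_def by (rule N) simp
    have Ylim: "Y \<longlonglongrightarrow> 0" unfolding Y_def by (rule LIMSEQ_ignore_initial_segment[OF X])
    have YT: "t + Y n \<in> \<Theta>" for n using e(2)[of "t + Y n"] Yb[of n] \<epsilon> by simp
    have eqI: "(Z (t + Y n) - Z t) / Y n = (\<integral>y. (G (t + Y n) y - G t y) / Y n \<partial>\<nu>)" for n
      unfolding Z_def using G_int[OF YT[of n]] G_int[OF tT] by simp
    have lim: "(\<lambda>n. \<integral>y. (G (t + Y n) y - G t y) / Y n \<partial>\<nu>) \<longlonglongrightarrow> (\<integral>y. r * (y * G t y) \<partial>\<nu>)"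
    proof (rule integral_dominated_convergence[where w = w])
      show "(\<lambda>y. r * (y * G t y)) \<in> borel_measurable \<nu>" by measurable
      show "(\<lambda>y. (G (t + Y n) y - G t y) / Y n) \<in> borel_measurable \<nu>" for n by measurable
      show "integrable \<nu> w" by (rule w_int)
      show "AE y in \<nu>. (\<lambda>n. (G (t + Y n) y - G t y) / Y n) \<longlonglongrightarrow> r * (y * G t y)"
      proof (intro AE_I2)
        fix y
        have "((\<lambda>h. (G (t + h) y - G t y) / h) \<circ> Y) \<longlonglongrightarrow> r * (y * G t y)"
          using ptw[of y] Y0 Ylim unfolding tendsto_at_iff_sequentially by simp
        then show "(\<lambda>n. (G (t + Y n) y - G t y) / Y n) \<longlonglongrightarrow> r * (y * G t y)" by (simp add: o_def)
      qed
      show "AE y in \<nu>. norm ((G (t + Y n) y - G t y) / Y n) \<le> w y" for n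
        using bound[OF Y0[of n] less_imp_le[OF Yb[of n]]] by simp
    qed
    have "(\<lambda>n. ((\<lambda>h. (Z (t + h) - Z t) / h) \<circ> X) (n + N)) \<longlonglongrightarrow> r * (\<integral>y. y * G t y \<partial>\<nu>)"
      using lim unfolding eqI[symmetric] by (simp add: Y_def o_def)
    then show "((\<lambda>h. (Z (t + h) - Z t) / h) \<circ> X) \<longlonglongrightarrow> r * (\<integral>y. y * G t y \<partial>\<nu>)"
      by (rule LIMSEQ_offset)
  qed
qed

lemma m_eq: "t \<in> \<Theta> \<Longrightarrow> m t = (\<integral>y. y * G t y \<partial>\<nu>) / Z t"
  unfolding m_def by (simp add: dens_eq2)

lemma kappa_deriv:
  assumes t: "t \<in> interior \<Theta>"
  shows "(\<kappa> has_real_derivative m t) (at t)"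
proof -
  have tT: "t \<in> \<Theta>" using t interior_subset by blast
  have d: "((\<lambda>s. ln (Z s) / r) has_real_derivative (inverse (Z t) * (r * (\<integral>y. y * G t y \<partial>\<nu>))) / r) (at t)"
    by (rule DERIV_cdivide[OF DERIV_chain2[OF DERIV_ln[OF Z_pos[OF tT]] Z_deriv[OF t]]])
  have val: "(inverse (Z t) * (r * (\<integral>y. y * G t y \<partial>\<nu>))) / r = m t"
    using r_pos Z_pos[OF tT] by (simp add: m_eq[OF tT] field_simps)
  show ?thesis
  proof (rule has_field_derivative_transform_within_open[OF d[unfolded val]])
    show "open (interior \<Theta>)" by simp
    show "t \<in> interior \<Theta>" by (rule t)
    show "ln (Z s) / r = \<kappa> s" if "s \<in> interior \<Theta>" for s
    proof -
      have "s \<in> \<Theta>" using that interior_subset by blast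
      then show ?thesis by (simp add: kappa_ln)
    qed
  qed
qed

lemma deriv_kappa: "t \<in> interior \<Theta> \<Longrightarrow> deriv \<kappa> t = m t"
  by (rule DERIV_imp_deriv[OF kappa_deriv])


lemma ydens_int:
  assumes t: "t \<in> interior \<Theta>"
  shows "integrable \<nu> (\<lambda>y. y * edf_density \<kappa> a v \<phi> t y)"
proof -
  have tT: "t \<in> \<Theta>" using t interior_subset by blast
  have "integrable \<nu> (\<lambda>y. y * G t y / Z t)"
    using yG_int[OF t] by (rule integrable_divide_zero)
  then show ?thesis by (simp add: dens_eq2[OF tT])
qed

lemma m_neq:
  assumes t1: "t1 \<in> interior \<Theta>" and t2: "t2 \<in> interior \<Theta>" and lt: "t1 < t2"
  shows "m t1 \<noteq> m t2"
proof
  assume eqm: "m t1 = m t2"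
  have t1T: "t1 \<in> \<Theta>" and t2T: "t2 \<in> \<Theta>" using t1 t2 interior_subset by blast+
  define p1 where "p1 = edf_density \<kappa> a v \<phi> t1"
  define p2 where "p2 = edf_density \<kappa> a v \<phi> t2"
  define c where "c = r * (t2 - t1)"
  define K where "K = r * (\<kappa> t2 - \<kappa> t1)"
  define E where "E = (\<lambda>y. exp (c * y - K))"
  define M1 where "M1 = m t1"
  have c: "0 < c" unfolding c_def using r_pos lt by simp
  have p2E: "p2 y = p1 y * E y" for y
  proof -
    have "r * (y * t2 - \<kappa> t2) + a y r = (r * (y * t1 - \<kappa> t1) + a y r) + (c * y - K)"
      unfolding c_def K_def by (simp add: algebra_simps)
    then show ?thesis unfolding p1_def p2_def E_def dens_alt by (simp add: exp_add)
  qed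
  have Emono: "E x < E y" if "x < y" for x y
    unfolding E_def using c that by simp
  define f where "f = (\<lambda>y. p1 y * ((y - M1) * (E y - E M1)))"
  have fexp: "f = (\<lambda>y. y * p2 y - M1 * p2 y - E M1 * (y * p1 y) + (E M1 * M1) * p1 y)"
    unfolding f_def p2E by (simp add: algebra_simps fun_eq_iff)
  have ip1: "integrable \<nu> p1" unfolding p1_def by (rule dens_int[OF t1T])
  have ip2: "integrable \<nu> p2" unfolding p2_def by (rule dens_int[OF t2T])
  have iyp1: "integrable \<nu> (\<lambda>y. y * p1 y)" unfolding p1_def by (rule ydens_int[OF t1])
  have iyp2: "integrable \<nu> (\<lambda>y. y * p2 y)" unfolding p2_def by (rule ydens_int[OF t2])
  have Ip1: "(\<integral>y. p1 y \<partial>\<nu>) = 1" unfolding p1_def by (rule dens_integral[OF t1T])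
  have Ip2: "(\<integral>y. p2 y \<partial>\<nu>) = 1" unfolding p2_def by (rule dens_integral[OF t2T])
  have Iyp1: "(\<integral>y. y * p1 y \<partial>\<nu>) = M1" unfolding p1_def M1_def m_def ..
  have Iyp2: "(\<integral>y. y * p2 y \<partial>\<nu>) = M1" using eqm unfolding p2_def M1_def m_def by simp
  have fint: "integrable \<nu> f"
    unfolding fexp using ip1 ip2 iyp1 iyp2 by simp
  have fI: "(\<integral>y. f y \<partial>\<nu>) = 0"
    unfolding fexp using ip1 ip2 iyp1 iyp2 by (simp add: Ip1 Ip2 Iyp1 Iyp2)
  have fnn: "0 \<le> f y" for y
  proof -
    have "0 \<le> (y - M1) * (E y - E M1)"
    proof (cases "M1 \<le> y")
      case True
      then have "E M1 \<le> E y" using Emono[of M1 y] by (cases "M1 = y") auto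
      then show ?thesis using True by simp
    next
      case False
      then have "E y \<le> E M1" using Emono[of y M1] by simp
      then show ?thesis using False by (simp add: mult_nonpos_nonpos)
    qed
    moreover have "0 < p1 y" unfolding p1_def by (rule dens_pos)
    ultimately show ?thesis unfolding f_def by simp
  qed
  have "AE y in \<nu>. f y = 0"
    using integral_nonneg_eq_0_iff_AE[OF fint] fnn fI by simp
  then have "AE y in \<nu>. y = M1"
  proof (rule AE_mp, intro AE_I2 impI)
    fix y assume "f y = 0"
    moreover have "0 < p1 y" unfolding p1_def by (rule dens_pos)
    ultimately have "(y - M1) * (E y - E M1) = 0" unfolding f_def by simp
    moreover have "E y \<noteq> E M1" if "y \<noteq> M1"
      using Emono[of y M1] Emono[of M1 y] that by (cases "y < M1") auto
    ultimately show "y = M1" by auto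
  qed
  then show False using A1_nu by blast
qed

lemma deriv_inj: "inj_on (deriv \<kappa>) (interior \<Theta>)"
proof (rule inj_onI)
  fix x y assume x: "x \<in> interior \<Theta>" and y: "y \<in> interior \<Theta>" and eq: "deriv \<kappa> x = deriv \<kappa> y"
  then have "m x = m y" using deriv_kappa[OF x] deriv_kappa[OF y] by simp
  then show "x = y" using m_neq[OF x y] m_neq[OF y x] by (cases x y rule: linorder_cases) auto
qed

lemma canon_link_deriv: "t \<in> interior \<Theta> \<Longrightarrow> canon_link \<kappa> \<Theta> (deriv \<kappa> t) = t"
  unfolding canon_link_def by (rule the_inv_into_f_f[OF deriv_inj])

lemma space_nu: "space \<nu> = UNIV"
  using sets_eq_imp_space_eq[OF nu_sets] by simp

lemma edf_prob: "t \<in> \<Theta> \<Longrightarrow> prob_space (edf_measure \<nu> \<kappa> a v \<phi> t)"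
  unfolding edf_measure_def
proof (rule prob_spaceI)
  assume t: "t \<in> \<Theta>"
  have U: "UNIV \<in> sets \<nu>" by (simp add: nu_sets)
  show "emeasure (density \<nu> (\<lambda>y. ennreal (edf_density \<kappa> a v \<phi> t y))) (space (density \<nu> (\<lambda>y. ennreal (edf_density \<kappa> a v \<phi> t y)))) = 1"
    by (simp add: space_nu emeasure_density[OF _ U] cumulant[OF t])
qed

lemma edf_sets: "sets (edf_measure \<nu> \<kappa> a v \<phi> t) = sets borel"
  unfolding edf_measure_def by (simp add: nu_sets)

lemma edf_space: "space (edf_measure \<nu> \<kappa> a v \<phi> t) = UNIV"
  using sets_eq_imp_space_eq[OF edf_sets[of t]] by simp

lemma edf_mean: "t \<in> \<Theta> \<Longrightarrow> (\<integral>y. y \<partial>edf_measure \<nu> \<kappa> a v \<phi> t) = m t"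
  unfolding edf_measure_def m_def
  by (subst integral_density) (auto simp: less_imp_le[OF dens_pos] mult.commute)

end

theorem proposition3p5:
  fixes \<nu> :: "real measure" and \<kappa> :: "real \<Rightarrow> real" and \<Theta> :: "real set"
    and a :: "real \<Rightarrow> real \<Rightarrow> real" and v \<phi> \<theta> \<delta> :: real
    and M :: "'w measure" and Y :: "'w \<Rightarrow> real"
  assumes nu_sf: "sigma_finite_measure \<nu>"
    and nu_sets: "sets \<nu> = sets borel"
    and a_meas: "(\<lambda>y. a y (v / \<phi>)) \<in> borel_measurable borel"
    and v_pos: "v > 0" and phi_pos: "\<phi> > 0"
    \<comment> \<open>\<Theta> is the effective domain, and \<kappa> is the cumulant function on it\<close>
    and eff_dom: "\<Theta> = {t. (\<integral>\<^sup>+ y. ennreal (exp (y * t / (\<phi> / v) + a y (v / \<phi>))) \<partial>\<nu>) < \<infinity>}"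
    and cumulant: "\<And>t. t \<in> \<Theta> \<Longrightarrow> (\<integral>\<^sup>+ y. ennreal (edf_density \<kappa> a v \<phi> t y) \<partial>\<nu>) = 1"
    \<comment> \<open>Assumption (A1)\<close>
    and A1_int: "interior \<Theta> \<noteq> {}"
    and A1_nu: "\<not> (\<exists>x. AE y in \<nu>. y = x)"
    and theta: "\<theta> \<in> interior \<Theta>"
    and delta: "0 < \<delta>" "\<delta> < 1"
    and M: "prob_space M"
    and Y_meas: "Y \<in> borel_measurable M"
    and Y_law: "distr M borel Y = edf_measure \<nu> \<kappa> a v \<phi> \<theta>"
  shows "measure M {\<omega> \<in> space M. ereal (prob_space.expectation M Y) \<ge> lower_bd \<nu> \<kappa> \<Theta> a v \<phi> \<delta> (Y \<omega>)} \<ge> 1 - \<delta>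
       \<and> measure M {\<omega> \<in> space M. ereal (prob_space.expectation M Y) \<le> upper_bd \<nu> \<kappa> \<Theta> a v \<phi> \<delta> (Y \<omega>)} \<ge> 1 - \<delta>"
proof -
  interpret E: edf_ctx \<nu> \<kappa> \<Theta> a v \<phi>
    apply unfold_locales
          apply (rule nu_sets)
         apply (rule a_meas)
        apply (rule v_pos)
       apply (rule phi_pos)
      apply (rule eff_dom)
     apply (rule cumulant, assumption)
    apply (rule A1_nu)
    done
  interpret M: prob_space M by (rule M)
  define P where "P = edf_measure \<nu> \<kappa> a v \<phi> \<theta>"
  have thT: "\<theta> \<in> \<Theta>" using theta interior_subset by blast
  have P: "prob_space P" unfolding P_def by (rule E.edf_prob[OF thT])
  interpret P: prob_space P by (rule P)
  have sP: "sets P = sets borel" unfolding P_def by (rule E.edf_sets)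
  have spP: "space P = UNIV" unfolding P_def by (rule E.edf_space)
  define \<mu>0 where "\<mu>0 = deriv \<kappa> \<theta>"
  have expY: "integral\<^sup>L M Y = \<mu>0"
  proof -
    have "integral\<^sup>L M Y = integral\<^sup>L (distr M borel Y) (\<lambda>y. y)"
      using integral_distr[OF Y_meas, of "\<lambda>y. y"] by simp
    also have "integral\<^sup>L (distr M borel Y) (\<lambda>y. y) = E.m \<theta>"
      unfolding Y_law by (rule E.edf_mean[OF thT])
    also have "\<dots> = \<mu>0" unfolding \<mu>0_def by (rule E.deriv_kappa[OF theta, symmetric])
    finally show ?thesis .
  qed
  have link: "canon_link \<kappa> \<Theta> \<mu>0 = \<theta>" unfolding \<mu>0_def by (rule E.canon_link_deriv[OF theta])
  have mu0_in: "\<mu>0 \<in> deriv \<kappa> ` interior \<Theta>" unfolding \<mu>0_def using theta by blast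
  have cdf0: "edf_cdf \<nu> \<kappa> \<Theta> a v \<phi> \<mu>0 y = measure P {..y}" for y
    unfolding edf_cdf_def link P_def ..
  have cdfs0: "edf_cdf_strict \<nu> \<kappa> \<Theta> a v \<phi> \<mu>0 y = measure P {..<y}" for y
    unfolding edf_cdf_strict_def link P_def ..
  have cdf_mono: "edf_cdf \<nu> \<kappa> \<Theta> a v \<phi> \<mu> x \<le> edf_cdf \<nu> \<kappa> \<Theta> a v \<phi> \<mu> y
      \<and> edf_cdf_strict \<nu> \<kappa> \<Theta> a v \<phi> \<mu> x \<le> edf_cdf_strict \<nu> \<kappa> \<Theta> a v \<phi> \<mu> y"
    if mu: "\<mu> \<in> deriv \<kappa> ` interior \<Theta>" and xy: "x \<le> y" for \<mu> x y
  proof -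
    obtain t where t: "t \<in> interior \<Theta>" and mut: "\<mu> = deriv \<kappa> t" using mu by blast
    have tT: "t \<in> \<Theta>" using t interior_subset by blast
    have l: "canon_link \<kappa> \<Theta> \<mu> = t" unfolding mut by (rule E.canon_link_deriv[OF t])
    interpret Q: prob_space "edf_measure \<nu> \<kappa> a v \<phi> t" by (rule E.edf_prob[OF tT])
    have "measure (edf_measure \<nu> \<kappa> a v \<phi> t) {..x} \<le> measure (edf_measure \<nu> \<kappa> a v \<phi> t) {..y}"
      using xy by (intro Q.finite_measure_mono) (auto simp: E.edf_sets)
    moreover have "measure (edf_measure \<nu> \<kappa> a v \<phi> t) {..<x} \<le> measure (edf_measure \<nu> \<kappa> a v \<phi> t) {..<y}"
      using xy by (intro Q.finite_measure_mono) (auto simp: E.edf_sets)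
    ultimately show ?thesis unfolding edf_cdf_def edf_cdf_strict_def l by simp
  qed
  define LB where "LB = lower_bd \<nu> \<kappa> \<Theta> a v \<phi> \<delta>"
  define UB where "UB = upper_bd \<nu> \<kappa> \<Theta> a v \<phi> \<delta>"
  have LB_mono: "LB x \<le> LB y" if "x \<le> y" for x y
  proof -
    have "{\<mu> \<in> deriv \<kappa> ` interior \<Theta>. edf_cdf_strict \<nu> \<kappa> \<Theta> a v \<phi> \<mu> y \<le> 1 - \<delta>}
        \<subseteq> {\<mu> \<in> deriv \<kappa> ` interior \<Theta>. edf_cdf_strict \<nu> \<kappa> \<Theta> a v \<phi> \<mu> x \<le> 1 - \<delta>}"
      using cdf_mono[OF _ that] by (auto intro: order_trans)
    then show ?thesis unfolding LB_def lower_bd_def by (intro Inf_superset_mono image_mono)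
  qed
  have UB_mono: "UB x \<le> UB y" if "x \<le> y" for x y
  proof -
    have "{\<mu> \<in> deriv \<kappa> ` interior \<Theta>. \<delta> \<le> edf_cdf \<nu> \<kappa> \<Theta> a v \<phi> \<mu> x}
        \<subseteq> {\<mu> \<in> deriv \<kappa> ` interior \<Theta>. \<delta> \<le> edf_cdf \<nu> \<kappa> \<Theta> a v \<phi> \<mu> y}"
      using cdf_mono[OF _ that] by (auto intro: order_trans)
    then show ?thesis unfolding UB_def upper_bd_def by (intro Sup_subset_mono image_mono)
  qed
  have dist: "measure M {\<omega> \<in> space M. Y \<omega> \<in> S} = measure P S" if "S \<in> sets borel" for S
  proof -
    have "measure P S = measure M (Y -` S \<inter> space M)"
      unfolding P_def Y_law[symmetric] by (rule measure_distr[OF Y_meas that])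
    moreover have "Y -` S \<inter> space M = {\<omega> \<in> space M. Y \<omega> \<in> S}" by blast
    ultimately show ?thesis by simp
  qed
  define D where "D = {y. LB y \<le> ereal \<mu>0}"
  define B where "B = {y. 1 - \<delta> < measure P {..<y}}"
  have D_b: "D \<in> sets borel"
    by (rule downset_borel) (use LB_mono in \<open>force simp: D_def intro: order_trans\<close>)
  have B_up: "x \<in> B" if "y \<in> B" "y \<le> x" for x y
  proof -
    have "measure P {..<y} \<le> measure P {..<x}"
      using that by (intro P.finite_measure_mono) (auto simp: sP)
    then show ?thesis using that unfolding B_def by simp
  qed
  have B_b: "B \<in> sets borel" by (rule upset_borel) (use B_up in blast)
  have PB: "measure P B \<le> \<delta>"
  proof (rule upset_prob_le[OF P sP])
    show "x \<in> B" if "y \<in> B" "y \<le> x" for x y using B_up that .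
    show "measure P {y..} \<le> \<delta>" if "y \<in> B" for y
    proof -
      have "{y..} = space P - {..<y}" using spP by auto
      then have "measure P {y..} = 1 - measure P {..<y}"
        using P.prob_compl[of "{..<y}"] by (simp add: sP)
      then show ?thesis using that unfolding B_def by simp
    qed
    show "0 \<le> \<delta>" using delta by simp
  qed
  have nB_D: "UNIV - B \<subseteq> D"
  proof
    fix y assume "y \<in> UNIV - B"
    then have "edf_cdf_strict \<nu> \<kappa> \<Theta> a v \<phi> \<mu>0 y \<le> 1 - \<delta>" unfolding B_def cdfs0 by simp
    then have "ereal \<mu>0 \<in> ereal ` {\<mu> \<in> deriv \<kappa> ` interior \<Theta>. edf_cdf_strict \<nu> \<kappa> \<Theta> a v \<phi> \<mu> y \<le> 1 - \<delta>}"
      using mu0_in by blast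
    then have "LB y \<le> ereal \<mu>0" unfolding LB_def lower_bd_def by (rule Inf_lower)
    then show "y \<in> D" unfolding D_def by simp
  qed
  have low: "measure M {\<omega> \<in> space M. ereal (integral\<^sup>L M Y) \<ge> lower_bd \<nu> \<kappa> \<Theta> a v \<phi> \<delta> (Y \<omega>)} \<ge> 1 - \<delta>"
  proof -
    have "{\<omega> \<in> space M. ereal (integral\<^sup>L M Y) \<ge> lower_bd \<nu> \<kappa> \<Theta> a v \<phi> \<delta> (Y \<omega>)} = {\<omega> \<in> space M. Y \<omega> \<in> D}"
      unfolding expY D_def LB_def by simp
    then have "measure M {\<omega> \<in> space M. ereal (integral\<^sup>L M Y) \<ge> lower_bd \<nu> \<kappa> \<Theta> a v \<phi> \<delta> (Y \<omega>)} = measure P D"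
      using dist[OF D_b] by simp
    moreover have "measure P (UNIV - B) \<le> measure P D"
      using nB_D D_b by (intro P.finite_measure_mono) (auto simp: sP)
    moreover have "measure P (UNIV - B) = 1 - measure P B"
      using P.prob_compl[of B] B_b by (simp add: sP spP)
    ultimately show ?thesis using PB by simp
  qed
  define U where "U = {y. ereal \<mu>0 \<le> UB y}"
  define A where "A = {y. measure P {..y} < \<delta>}"
  have U_b: "U \<in> sets borel"
    by (rule upset_borel) (use UB_mono in \<open>force simp: U_def intro: order_trans\<close>)
  have A_down: "x \<in> A" if "y \<in> A" "x \<le> y" for x y
  proof -
    have "measure P {..x} \<le> measure P {..y}"
      using that by (intro P.finite_measure_mono) (auto simp: sP)
    then show ?thesis using that unfolding A_def by simp
  qed
  have A_b: "A \<in> sets borel" by (rule downset_borel) (use A_down in blast)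
  have PA: "measure P A \<le> \<delta>"
  proof (rule downset_prob_le[OF P sP])
    show "x \<in> A" if "y \<in> A" "x \<le> y" for x y using A_down that .
    show "measure P {..y} \<le> \<delta>" if "y \<in> A" for y using that unfolding A_def by simp
    show "0 \<le> \<delta>" using delta by simp
  qed
  have nA_U: "UNIV - A \<subseteq> U"
  proof
    fix y assume "y \<in> UNIV - A"
    then have "\<delta> \<le> edf_cdf \<nu> \<kappa> \<Theta> a v \<phi> \<mu>0 y" unfolding A_def cdf0 by simp
    then have "ereal \<mu>0 \<in> ereal ` {\<mu> \<in> deriv \<kappa> ` interior \<Theta>. \<delta> \<le> edf_cdf \<nu> \<kappa> \<Theta> a v \<phi> \<mu> y}"
      using mu0_in by blast
    then have "ereal \<mu>0 \<le> UB y" unfolding UB_def upper_bd_def by (rule Sup_upper)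
    then show "y \<in> U" unfolding U_def by simp
  qed
  have upp: "measure M {\<omega> \<in> space M. ereal (integral\<^sup>L M Y) \<le> upper_bd \<nu> \<kappa> \<Theta> a v \<phi> \<delta> (Y \<omega>)} \<ge> 1 - \<delta>"
  proof -
    have "{\<omega> \<in> space M. ereal (integral\<^sup>L M Y) \<le> upper_bd \<nu> \<kappa> \<Theta> a v \<phi> \<delta> (Y \<omega>)} = {\<omega> \<in> space M. Y \<omega> \<in> U}"
      unfolding expY U_def UB_def by simp
    then have "measure M {\<omega> \<in> space M. ereal (integral\<^sup>L M Y) \<le> upper_bd \<nu> \<kappa> \<Theta> a v \<phi> \<delta> (Y \<omega>)} = measure P U"
      using dist[OF U_b] by simp
    moreover have "measure P (UNIV - A) \<le> measure P U"
      using nA_U U_b by (intro P.finite_measure_mono) (auto simp: sP)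
    moreover have "measure P (UNIV - A) = 1 - measure P A"
      using P.prob_compl[of A] A_b by (simp add: sP spP)
    ultimately show ?thesis using PA by simp
  qed
  show ?thesis using low upp by simp
qed

end
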